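(* Let $N$ be a binary tree-based network. Then each connected component of $\mathcal{J}_N$ is one of the following: (i) a cycle; (ii) a path whose end vertices are tree vertices of $N$, neither of which is an omnian; (iii) a path whose end vertices are tree vertices of $N$, exactly one of which is an omnian.
   Context: A phylogenetic network on a nonempty finite set $X$ is a rooted acyclic digraph with no parallel arcs such that: the unique root has out-degree at least one; $X$ is exactly the set of vertices of out-degree zero (leaves), each of in-degree one; every other vertex either has in-degree one and out-degree at least two (a tree vertex) or in-degree at least two and out-degree one (a reticulation). It is binary if every tree vertex has out-degree two and every reticulation has in-degree two. An omnian is a non-leaf vertex all of whose children are reticulations. $N$ is tree-based if it has a spanning tree rooted at the root of $N$ all of whose leaves lie in $X$. Let $R_t$ be the set of reticulations of $N$ with no reticulation parent, and $Q_t$ the set of vertices of $N$ having a child in $R_t$. $\mathcal{J}_N$ is the bipartite graph with vertex bipartition $\{Q_t,R_t\}$ and an edge $\{q,r\}$ for each arc $(q,r)$ of $N$ with $q\in Q_t$, $r\in R_t$. *)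

theory Defs
  imports Main
begin

definition indeg :: "('a \<times> 'a) set \<Rightarrow> 'a \<Rightarrow> nat" where
  "indeg A v = card {u. (u, v) \<in> A}"

definition outdeg :: "('a \<times> 'a) set \<Rightarrow> 'a \<Rightarrow> nat" where
  "outdeg A v = card {w. (v, w) \<in> A}"

text \<open>Phylogenetic network on X with root rho (arcs as a set: no parallel arcs).\<close>
definition phylo_network :: "'a set \<Rightarrow> ('a \<times> 'a) set \<Rightarrow> 'a set \<Rightarrow> 'a \<Rightarrow> bool" where
  "phylo_network V A X rho \<longleftrightarrow>
     finite V \<and> A \<subseteq> V \<times> V \<and> acyclic A \<and> rho \<in> V \<and>
     (\<forall>v\<in>V. indeg A v = 0 \<longleftrightarrow> v = rho) \<and> outdeg A rho \<ge> 1 \<and>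
     X \<noteq> {} \<and> X = {v \<in> V. outdeg A v = 0} \<and> (\<forall>x\<in>X. indeg A x = 1) \<and>
     (\<forall>v \<in> V - {rho} - X.
        (indeg A v = 1 \<and> outdeg A v \<ge> 2) \<or> (indeg A v \<ge> 2 \<and> outdeg A v = 1))"

text \<open>Tree vertex: in-degree at most one and out-degree at least two (the root counts
  as a tree vertex when it has out-degree at least two).\<close>
definition tree_vertex :: "'a set \<Rightarrow> ('a \<times> 'a) set \<Rightarrow> 'a \<Rightarrow> bool" where
  "tree_vertex V A v \<longleftrightarrow> v \<in> V \<and> indeg A v \<le> 1 \<and> outdeg A v \<ge> 2"

definition reticulation :: "'a set \<Rightarrow> ('a \<times> 'a) set \<Rightarrow> 'a \<Rightarrow> bool" where
  "reticulation V A v \<longleftrightarrow> v \<in> V \<and> indeg A v \<ge> 2"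

definition binary_network :: "'a set \<Rightarrow> ('a \<times> 'a) set \<Rightarrow> 'a set \<Rightarrow> 'a \<Rightarrow> bool" where
  "binary_network V A X rho \<longleftrightarrow> phylo_network V A X rho \<and>
     (\<forall>v\<in>V. tree_vertex V A v \<longrightarrow> outdeg A v = 2) \<and>
     (\<forall>v\<in>V. reticulation V A v \<longrightarrow> indeg A v = 2) \<and>
     outdeg A rho \<le> 2"

definition omnian :: "'a set \<Rightarrow> ('a \<times> 'a) set \<Rightarrow> 'a set \<Rightarrow> 'a \<Rightarrow> bool" where
  "omnian V A X v \<longleftrightarrow> v \<in> V \<and> v \<notin> X \<and> (\<forall>c. (v, c) \<in> A \<longrightarrow> reticulation V A c)"

text \<open>Tree-based: a spanning arborescence rooted at rho (every non-root vertex has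
  exactly one incoming tree arc) all of whose leaves lie in X.\<close>
definition tree_based :: "'a set \<Rightarrow> ('a \<times> 'a) set \<Rightarrow> 'a set \<Rightarrow> 'a \<Rightarrow> bool" where
  "tree_based V A X rho \<longleftrightarrow>
     (\<exists>T \<subseteq> A. (\<forall>v \<in> V - {rho}. card {u. (u, v) \<in> T} = 1) \<and>
               (\<forall>v\<in>V. (\<forall>w. (v, w) \<notin> T) \<longrightarrow> v \<in> X))"

definition R_t :: "'a set \<Rightarrow> ('a \<times> 'a) set \<Rightarrow> 'a set" where
  "R_t V A = {r. reticulation V A r \<and> (\<forall>p. (p, r) \<in> A \<longrightarrow> \<not> reticulation V A p)}"

definition Q_t :: "'a set \<Rightarrow> ('a \<times> 'a) set \<Rightarrow> 'a set" where
  "Q_t V A = {q \<in> V. \<exists>r \<in> R_t V A. (q, r) \<in> A}"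

definition J_vertices :: "'a set \<Rightarrow> ('a \<times> 'a) set \<Rightarrow> 'a set" where
  "J_vertices V A = Q_t V A \<union> R_t V A"

definition J_edges :: "'a set \<Rightarrow> ('a \<times> 'a) set \<Rightarrow> 'a set set" where
  "J_edges V A = {{q, r} | q r. (q, r) \<in> A \<and> q \<in> Q_t V A \<and> r \<in> R_t V A}"

definition ug_components :: "'a set \<Rightarrow> 'a set set \<Rightarrow> 'a set set" where
  "ug_components W E = {{w. (v, w) \<in> {(x, y). {x, y} \<in> E}\<^sup>*} | v. v \<in> W}"

definition is_path_on :: "'a set \<Rightarrow> 'a set set \<Rightarrow> 'a list \<Rightarrow> bool" where
  "is_path_on C E ps \<longleftrightarrow> ps \<noteq> [] \<and> distinct ps \<and> set ps = C \<and>
     (\<forall>u\<in>C. \<forall>v\<in>C. {u, v} \<in> E \<longleftrightarrow>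
        (\<exists>i. Suc i < length ps \<and> {u, v} = {ps ! i, ps ! Suc i}))"

definition is_cycle_on :: "'a set \<Rightarrow> 'a set set \<Rightarrow> 'a list \<Rightarrow> bool" where
  "is_cycle_on C E ps \<longleftrightarrow> length ps \<ge> 3 \<and> distinct ps \<and> set ps = C \<and>
     (\<forall>u\<in>C. \<forall>v\<in>C. {u, v} \<in> E \<longleftrightarrow>
        (\<exists>i < length ps. {u, v} = {ps ! i, ps ! ((Suc i) mod length ps)}))"

end

theory Submission
  imports Defs
begin


lemma escape:
  assumes "(x,w) \<in> r\<^sup>*" "x \<in> S" "w \<notin> S"
  shows "\<exists>a b. a \<in> S \<and> b \<notin> S \<and> (a,b) \<in> r"
  using assms by (induction rule: rtrancl_induct) auto

lemma edge_sym: "{a,b} \<in> E \<Longrightarrow> {b,a} \<in> E"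
  by (metis insert_commute)

lemma path_or_cycle:
  assumes fin: "finite W"
   and ew: "\<And>x y. {x,y}\<in>E \<Longrightarrow> x\<in>W"
   and irr: "\<And>x. {x} \<notin> E"
   and deg: "\<And>v a b c. {v,a}\<in>E \<Longrightarrow> {v,b}\<in>E \<Longrightarrow> {v,c}\<in>E \<Longrightarrow> a=b \<or> a=c \<or> b=c"
   and v: "v\<in>W"
   and C: "C = {w. (v,w) \<in> {(x,y). {x,y}\<in>E}\<^sup>*}"
  shows "(\<exists>ps. is_cycle_on C E ps) \<or> (\<exists>ps. is_path_on C E ps)"
proof -
  let ?r = "{(x,y). {x,y}\<in>E}"
  have CW: "C \<subseteq> W"
  proof
    fix w assume "w\<in>C"
    hence "(v,w)\<in>?r\<^sup>*" using C by simp
    thus "w\<in>W" proof (induction rule: rtrancl_induct)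
      case base show ?case using v .
    next
      case (step y z) hence "{y,z}\<in>E" by simp hence "{z,y}\<in>E" by (rule edge_sym) thus ?case using ew by blast
    qed
  qed
  have finC: "finite C" using CW fin finite_subset by blast
  have closed: "w\<in>C" if "u\<in>C" "{u,w}\<in>E" for u w
  proof -
    have "(v,u)\<in>?r\<^sup>*" "(u,w)\<in>?r" using C that by auto
    hence "(v,w)\<in>?r\<^sup>*" by (rule rtrancl_into_rtrancl)
    thus ?thesis using C by simp
  qed
  have symr: "sym ?r" by (auto simp: sym_def insert_commute)
  have conn: "(x,y)\<in>?r\<^sup>*" if "x\<in>C" "y\<in>C" for x y
  proof -
    have "(v,x)\<in>?r\<^sup>*" "(v,y)\<in>?r\<^sup>*" using C that by auto
    moreover have "(x,v)\<in>?r\<^sup>*" by (rule symD[OF sym_rtrancl[OF symr] calculation(1)])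
    ultimately show ?thesis by (meson rtrancl_trans)
  qed
  define P where "P ps \<longleftrightarrow> ps \<noteq> [] \<and> distinct ps \<and> set ps \<subseteq> C \<and> (\<forall>i. Suc i < length ps \<longrightarrow> {ps!i, ps!Suc i}\<in>E)" for ps
  have vC: "v\<in>C" using C by simp
  have P1: "P [v]" using vC by (simp add: P_def)
  have bound: "length ps < Suc (card C)" if "P ps" for ps
  proof -
    have "distinct ps" "set ps \<subseteq> C" using that P_def by auto
    hence "length ps \<le> card C" using distinct_card card_mono finC by metis
    thus ?thesis by simp
  qed
  have "\<exists>x. P x \<and> (\<forall>y. P y \<longrightarrow> length y \<le> length x)"
    by (rule ex_has_greatest_nat[of P "[v]" length "Suc (card C)", OF P1]) (use bound in blast)
  then obtain ps where Pps: "P ps" and maxl: "\<And>qs. P qs \<Longrightarrow> length qs \<le> length ps"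
    by blast
  define n where "n = length ps"
  have ne: "ps\<noteq>[]" and dist: "distinct ps" and sub: "set ps \<subseteq> C"
    and cons: "\<And>i. Suc i < n \<Longrightarrow> {ps!i, ps!Suc i}\<in>E" using Pps by (auto simp: P_def n_def)
  have npos: "n \<ge> 1" using ne n_def by (simp add: Suc_le_eq)
  have ext_last: "{ps!(n-1), w} \<notin> E" if "w\<notin>set ps" for w
  proof
    assume e: "{ps!(n-1), w} \<in> E"
    have "n - 1 < length ps" using npos n_def by simp
    hence "ps!(n-1) \<in> C" using sub nth_mem by blast
    hence wC: "w \<in> C" using closed e by blast
    have "P (ps @ [w])"
      unfolding P_def
    proof (intro conjI allI impI)
      show "distinct (ps @ [w])" using dist that by simp
      show "set (ps @ [w]) \<subseteq> C" using sub wC by simp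
      fix i assume i: "Suc i < length (ps @ [w])"
      show "{(ps @ [w]) ! i, (ps @ [w]) ! Suc i} \<in> E"
      proof (cases "Suc i < n")
        case True thus ?thesis using cons[OF True] by (simp add: nth_append n_def)
      next
        case False hence "Suc i = n" using i n_def by simp
        hence "i = n - 1" "Suc i = n" by simp_all
        thus ?thesis using e by (simp add: nth_append n_def)
      qed
    qed simp
    thus False using maxl[of "ps @ [w]"] n_def by simp
  qed
  have ext_hd: "{ps!0, w} \<notin> E" if "w\<notin>set ps" for w
  proof
    assume e: "{ps!0, w} \<in> E"
    have "0 < length ps" using ne by simp
    hence "ps!0 \<in> C" using sub nth_mem by blast
    hence wC: "w \<in> C" using closed e by blast
    have "P (w # ps)"
      unfolding P_def
    proof (intro conjI allI impI)
      show "distinct (w # ps)" using dist that by simp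
      show "set (w # ps) \<subseteq> C" using sub wC by simp
      fix i assume i: "Suc i < length (w # ps)"
      show "{(w # ps) ! i, (w # ps) ! Suc i} \<in> E"
      proof (cases i)
        case 0
        have "{(w # ps) ! i, (w # ps) ! Suc i} = {ps!0, w}" using 0 by auto
        thus ?thesis using e by simp
      next
        case (Suc j) thus ?thesis using cons[of j] i n_def by simp
      qed
    qed simp
    thus False using maxl[of "w # ps"] n_def by simp
  qed
  have interior: "w = ps!(i-1) \<or> w = ps!Suc i" if "0 < i" "Suc i < n" "{ps!i, w}\<in>E" for i w
  proof -
    have "Suc (i-1) = i" using that by simp
    hence "{ps!(i-1), ps!i} \<in> E" using cons[of "i-1"] that by simp
    hence e1: "{ps!i, ps!(i-1)} \<in> E" by (rule edge_sym)
    have e2: "{ps!i, ps!Suc i} \<in> E" using cons[of i] that by simp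
    have l: "i - 1 < length ps" "Suc i < length ps" using that n_def by auto
    have "ps!(i-1) \<noteq> ps!Suc i" using nth_eq_iff_index_eq[OF dist l] by simp
    thus ?thesis using deg[OF e1 e2 that(3)] by blast
  qed
  have setC: "set ps = C"
  proof (rule ccontr)
    assume "set ps \<noteq> C"
    then obtain w where w: "w \<in> C" "w \<notin> set ps" using sub by blast
    have "0 < length ps" using ne by simp
    hence p0: "ps!0 \<in> set ps" using nth_mem by blast
    hence "ps!0 \<in> C" using sub by blast
    from conn[OF this w(1)] have "(ps!0, w) \<in> ?r\<^sup>*" .
    from escape[OF this p0 w(2)] obtain a b where ab0: "a \<in> set ps" "b \<notin> set ps" "(a,b) \<in> ?r"
      by blast
    hence ab: "a \<in> set ps" "b \<notin> set ps" "{a,b} \<in> E" by auto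
    then obtain i where i: "i < n" "a = ps!i" by (auto simp: in_set_conv_nth n_def)
    show False
    proof (cases "i = 0")
      case True thus False using ext_hd ab i by blast
    next
      case False
      show False
      proof (cases "i = n - 1")
        case True thus False using ext_last ab i by blast
      next
        case False2: False
        hence si: "Suc i < n" using i by auto
        have "{ps!i, b} \<in> E" using ab(3) i(2) by simp
        hence "b = ps!(i-1) \<or> b = ps!Suc i" using interior[of i b] False si by blast
        moreover have "ps!(i-1) \<in> set ps" "ps!Suc i \<in> set ps" using si n_def by (auto intro!: nth_mem)
        ultimately show False using ab(2) by blast
      qed
    qed
  qed
  have ec1: "j = Suc i \<or> (i = 0 \<and> j = n-1)" if "i < j" "j < n" "{ps!i, ps!j}\<in>E" for i j
  proof (cases "0 < i")
    case True
    have si: "Suc i < n" using that by linarith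
    from interior[OF True si that(3)] have h: "ps!j = ps!(i-1) \<or> ps!j = ps!Suc i" .
    have l: "i - 1 < length ps" "Suc i < length ps" "j < length ps" using si that n_def by auto
    have "ps!j \<noteq> ps!(i-1)" using nth_eq_iff_index_eq[OF dist l(3) l(1)] that by simp
    hence "ps!j = ps!Suc i" using h by blast
    hence "j = Suc i" using nth_eq_iff_index_eq[OF dist l(3) l(2)] by simp
    thus ?thesis by simp
  next
    case False
    hence i0: "i = 0" by simp
    show ?thesis
    proof (cases "j = n - 1")
      case True thus ?thesis using i0 by simp
    next
      case False
      have e: "{ps!j, ps!i} \<in> E" using that(3) by (rule edge_sym)
      have j0: "0 < j" and sj: "Suc j < n" using that i0 False by auto
      from interior[OF j0 sj e] have h: "ps!i = ps!(j-1) \<or> ps!i = ps!Suc j" .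
      have l: "j - 1 < length ps" "Suc j < length ps" "i < length ps" using sj that n_def by auto
      have "ps!i \<noteq> ps!Suc j" using nth_eq_iff_index_eq[OF dist l(3) l(2)] i0 by simp
      hence "ps!i = ps!(j-1)" using h by blast
      hence "i = j - 1" using nth_eq_iff_index_eq[OF dist l(3) l(1)] by simp
      thus ?thesis using i0 j0 by simp
    qed
  qed
  have ec: "j = Suc i \<or> i = Suc j \<or> (i = 0 \<and> j = n-1) \<or> (j = 0 \<and> i = n-1)"
    if "i < n" "j < n" "{ps!i, ps!j}\<in>E" for i j
  proof -
    have "i \<noteq> j" using that(3) irr by auto
    hence "i < j \<or> j < i" by linarith
    thus ?thesis
    proof
      assume "i < j" thus ?thesis using ec1[of i j] that by blast
    next
      assume "j < i" moreover have "{ps!j, ps!i}\<in>E" using that(3) by (rule edge_sym)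
      ultimately show ?thesis using ec1[of j i] that by blast
    qed
  qed
  have nl: "length ps = n" using n_def by simp
  have uw: "{x,y} = {y,x}" for x y :: 'a by (rule insert_commute)
  show ?thesis
  proof (cases "{ps!0, ps!(n-1)} \<in> E \<and> n \<ge> 3")
    case True
    have "is_cycle_on C E ps"
      unfolding is_cycle_on_def nl
    proof (intro conjI ballI)
      show "3 \<le> n" using True by simp
      show "distinct ps" by (rule dist)
      show "set ps = C" by (rule setC)
      fix u w assume u: "u \<in> C" and w: "w \<in> C"
      obtain a where a: "a < n" "u = ps!a" using u setC by (auto simp: in_set_conv_nth nl)
      obtain b where b: "b < n" "w = ps!b" using w setC by (auto simp: in_set_conv_nth nl)
      show "{u, w} \<in> E \<longleftrightarrow> (\<exists>i<n. {u, w} = {ps ! i, ps ! (Suc i mod n)})"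
      proof
        assume e: "{u,w} \<in> E"
        have e': "{ps!a, ps!b} \<in> E" using e a b by simp
        from ec[OF a(1) b(1) e']
        have "b = Suc a \<or> a = Suc b \<or> (a = 0 \<and> b = n-1) \<or> (b = 0 \<and> a = n-1)" .
        thus "\<exists>i<n. {u, w} = {ps ! i, ps ! (Suc i mod n)}"
        proof (elim disjE conjE)
          assume h: "b = Suc a"
          hence "Suc a mod n = Suc a" using b(1) by simp
          hence "{u, w} = {ps ! a, ps ! (Suc a mod n)}" using a(2) b(2) h by simp
          thus ?thesis using a(1) by blast
        next
          assume h: "a = Suc b"
          hence "Suc b mod n = Suc b" using a(1) by simp
          hence "{w, u} = {ps ! b, ps ! (Suc b mod n)}" using a(2) b(2) h by simp
          hence "{u, w} = {ps ! b, ps ! (Suc b mod n)}" using uw by metis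
          thus ?thesis using b(1) by blast
        next
          assume h: "a = 0" "b = n - 1"
          have "Suc (n-1) mod n = 0" using npos by simp
          hence "{w, u} = {ps ! (n-1), ps ! (Suc (n-1) mod n)}" using a(2) b(2) h by simp
          hence "{u, w} = {ps ! (n-1), ps ! (Suc (n-1) mod n)}" using uw by metis
          moreover have "n - 1 < n" using npos by simp
          ultimately show ?thesis by blast
        next
          assume h: "b = 0" "a = n - 1"
          have "Suc (n-1) mod n = 0" using npos by simp
          hence "{u, w} = {ps ! (n-1), ps ! (Suc (n-1) mod n)}" using a(2) b(2) h by simp
          moreover have "n - 1 < n" using npos by simp
          ultimately show ?thesis by blast
        qed
      next
        assume "\<exists>i<n. {u, w} = {ps ! i, ps ! (Suc i mod n)}"
        then obtain i where i: "i < n" "{u, w} = {ps ! i, ps ! (Suc i mod n)}" by blast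
        show "{u,w} \<in> E"
        proof (cases "Suc i < n")
          case True
          hence "{u, w} = {ps ! i, ps ! Suc i}" using i(2) by simp
          thus ?thesis using cons[OF True] by simp
        next
          case False hence si: "Suc i = n" using i by linarith
          hence "i = n-1" "Suc i mod n = 0" by auto
          hence "{u,w} = {ps!(n-1), ps!0}" using i(2) by simp
          moreover have "{ps!0, ps!(n-1)} \<in> E" using True by simp
          hence "{ps!(n-1), ps!0} \<in> E" by (rule edge_sym)
          ultimately show ?thesis by (simp only:)
        qed
      qed
    qed
    thus ?thesis by blast
  next
    case False
    have "is_path_on C E ps"
      unfolding is_path_on_def nl
    proof (intro conjI ballI)
      show "ps \<noteq> []" by (rule ne)
      show "distinct ps" by (rule dist)
      show "set ps = C" by (rule setC)
      fix u w assume u: "u \<in> C" and w: "w \<in> C"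
      obtain a where a: "a < n" "u = ps!a" using u setC by (auto simp: in_set_conv_nth nl)
      obtain b where b: "b < n" "w = ps!b" using w setC by (auto simp: in_set_conv_nth nl)
      show "{u, w} \<in> E \<longleftrightarrow> (\<exists>i. Suc i < n \<and> {u, w} = {ps ! i, ps ! Suc i})"
      proof
        assume e: "{u,w} \<in> E"
        have e': "{ps!a, ps!b} \<in> E" using e a b by simp
        have ab: "a \<noteq> b" using e' irr by auto
        from ec[OF a(1) b(1) e']
        have "b = Suc a \<or> a = Suc b \<or> (a = 0 \<and> b = n-1) \<or> (b = 0 \<and> a = n-1)" .
        thus "\<exists>i. Suc i < n \<and> {u, w} = {ps ! i, ps ! Suc i}"
        proof (elim disjE conjE)
          assume h: "b = Suc a"
          hence "{u, w} = {ps ! a, ps ! Suc a}" using a(2) b(2) by simp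
          thus ?thesis using b(1) h by blast
        next
          assume h: "a = Suc b"
          hence "{w, u} = {ps ! b, ps ! Suc b}" using a(2) b(2) by simp
          hence "{u, w} = {ps ! b, ps ! Suc b}" using uw by metis
          thus ?thesis using a(1) h by blast
        next
          assume h: "a = 0" "b = n - 1"
          hence "n < 3" using False e' by auto
          hence h2: "b = Suc a" using h ab by linarith
          hence "{u, w} = {ps ! a, ps ! Suc a}" using a(2) b(2) by simp
          thus ?thesis using b(1) h2 by blast
        next
          assume h: "b = 0" "a = n - 1"
          have "{ps!(n-1), ps!0} \<in> E" using e' h by simp
          hence "{ps!0, ps!(n-1)} \<in> E" by (rule edge_sym)
          hence "n < 3" using False by auto
          hence h2: "a = Suc b" using h ab by linarith
          hence "{w, u} = {ps ! b, ps ! Suc b}" using a(2) b(2) by simp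
          hence "{u, w} = {ps ! b, ps ! Suc b}" using uw by metis
          thus ?thesis using a(1) h2 by blast
        qed
      next
        assume "\<exists>i. Suc i < n \<and> {u, w} = {ps ! i, ps ! Suc i}"
        then obtain i where "Suc i < n" "{u, w} = {ps ! i, ps ! Suc i}" by blast
        thus "{u,w} \<in> E" using cons by simp
      qed
    qed
    thus ?thesis by blast
  qed
qed


lemma three_le2:
  assumes "finite S" "card S \<le> 2" "a \<in> S" "b \<in> S" "c \<in> S"
  shows "a = b \<or> a = c \<or> b = c"
proof (rule ccontr)
  assume "\<not> ?thesis"
  hence "card {a,b,c} = 3" by auto
  moreover have "card {a,b,c} \<le> card S" using assms by (intro card_mono) auto
  ultimately show False using assms(2) by simp
qed

lemma bn_basic:
  assumes "binary_network V A X rho"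
  shows "finite V" "A \<subseteq> V \<times> V" "acyclic A" "rho \<in> V"
    "\<And>v. v \<in> V \<Longrightarrow> indeg A v = 0 \<longleftrightarrow> v = rho"
    "X = {v \<in> V. outdeg A v = 0}" "\<And>x. x \<in> X \<Longrightarrow> indeg A x = 1"
    "\<And>v. v \<in> V - {rho} - X \<Longrightarrow> (indeg A v = 1 \<and> outdeg A v \<ge> 2) \<or> (indeg A v \<ge> 2 \<and> outdeg A v = 1)"
    "\<And>v. v \<in> V \<Longrightarrow> tree_vertex V A v \<Longrightarrow> outdeg A v = 2"
    "\<And>v. v \<in> V \<Longrightarrow> reticulation V A v \<Longrightarrow> indeg A v = 2"
    "outdeg A rho \<le> 2" "outdeg A rho \<ge> 1"
proof -
  note h = assms[unfolded binary_network_def phylo_network_def]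
  show "finite V" using h by blast
  show "A \<subseteq> V \<times> V" using h by blast
  show "acyclic A" using h by blast
  show "rho \<in> V" using h by blast
  show "\<And>v. v \<in> V \<Longrightarrow> indeg A v = 0 \<longleftrightarrow> v = rho" using h by auto
  show "X = {v \<in> V. outdeg A v = 0}" using h by blast
  show "\<And>x. x \<in> X \<Longrightarrow> indeg A x = 1" using h by blast
  show "\<And>v. v \<in> V - {rho} - X \<Longrightarrow> (indeg A v = 1 \<and> outdeg A v \<ge> 2) \<or> (indeg A v \<ge> 2 \<and> outdeg A v = 1)"
    using h by blast
  show "\<And>v. v \<in> V \<Longrightarrow> tree_vertex V A v \<Longrightarrow> outdeg A v = 2" using h by blast
  show "\<And>v. v \<in> V \<Longrightarrow> reticulation V A v \<Longrightarrow> indeg A v = 2" using h by blast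
  show "outdeg A rho \<le> 2" using h by blast
  show "outdeg A rho \<ge> 1" using h by blast
qed

lemma fin_par: "binary_network V A X rho \<Longrightarrow> finite {u. (u,v) \<in> A}"
proof -
  assume bn: "binary_network V A X rho"
  have "{u. (u,v) \<in> A} \<subseteq> V" using bn_basic(2)[OF bn] by blast
  thus ?thesis using bn_basic(1)[OF bn] finite_subset by blast
qed

lemma fin_ch: "binary_network V A X rho \<Longrightarrow> finite {w. (v,w) \<in> A}"
proof -
  assume bn: "binary_network V A X rho"
  have "{w. (v,w) \<in> A} \<subseteq> V" using bn_basic(2)[OF bn] by blast
  thus ?thesis using bn_basic(1)[OF bn] finite_subset by blast
qed

lemma outdeg_le2:
  assumes bn: "binary_network V A X rho" and v: "v \<in> V"
  shows "outdeg A v \<le> 2"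
proof -
  note b = bn_basic[OF bn]
  show ?thesis
  proof (cases "v = rho")
    case True thus ?thesis using b(11) by simp
  next
    case F1: False
    show ?thesis
    proof (cases "v \<in> X")
      case True thus ?thesis using b(6) by simp
    next
      case False
      hence "(indeg A v = 1 \<and> outdeg A v \<ge> 2) \<or> (indeg A v \<ge> 2 \<and> outdeg A v = 1)" using b(8) v F1 by blast
      thus ?thesis
      proof
        assume "indeg A v = 1 \<and> outdeg A v \<ge> 2"
        hence "tree_vertex V A v" using v by (simp add: tree_vertex_def)
        thus ?thesis using b(9) v by simp
      qed simp
    qed
  qed
qed

lemma indeg_le2:
  assumes bn: "binary_network V A X rho" and v: "v \<in> V"
  shows "indeg A v \<le> 2"
proof (cases "indeg A v \<ge> 2")
  case True
  hence "reticulation V A v" using v by (simp add: reticulation_def)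
  thus ?thesis using bn_basic(10)[OF bn v] by simp
qed simp

lemma ret_props:
  assumes bn: "binary_network V A X rho" and p: "reticulation V A p"
  shows "outdeg A p = 1" "p \<notin> X" "p \<noteq> rho" "p \<in> V"
proof -
  note b = bn_basic[OF bn]
  show pV: "p \<in> V" using p by (simp add: reticulation_def)
  have ge: "indeg A p \<ge> 2" using p by (simp add: reticulation_def)
  show nr: "p \<noteq> rho" using b(5)[OF pV] ge by auto
  show nx: "p \<notin> X" using b(7) ge by force
  have "(indeg A p = 1 \<and> outdeg A p \<ge> 2) \<or> (indeg A p \<ge> 2 \<and> outdeg A p = 1)" using b(8) pV nr nx by blast
  thus "outdeg A p = 1" using ge by auto
qed

lemma R_sub: "r \<in> R_t V A \<Longrightarrow> reticulation V A r \<and> r \<in> V"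
  by (simp add: R_t_def reticulation_def)

lemma Q_not_ret: "q \<in> Q_t V A \<Longrightarrow> \<not> reticulation V A q \<and> q \<in> V"
  unfolding Q_t_def R_t_def by blast

lemma QR_disj: "q \<in> Q_t V A \<Longrightarrow> q \<notin> R_t V A"
proof
  assume "q \<in> Q_t V A" "q \<in> R_t V A"
  thus False using Q_not_ret[of q V A] R_sub[of q V A] by simp
qed

lemma J_edge_iff:
  "{x,y} \<in> J_edges V A \<longleftrightarrow>
     (x \<in> Q_t V A \<and> y \<in> R_t V A \<and> (x,y) \<in> A) \<or> (y \<in> Q_t V A \<and> x \<in> R_t V A \<and> (y,x) \<in> A)"
proof
  assume "{x,y} \<in> J_edges V A"
  then obtain q r where h: "{x,y} = {q,r}" "(q,r) \<in> A" "q \<in> Q_t V A" "r \<in> R_t V A"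
    unfolding J_edges_def by blast
  from h(1) have "(x = q \<and> y = r) \<or> (x = r \<and> y = q)" by (simp add: doubleton_eq_iff)
  thus "(x \<in> Q_t V A \<and> y \<in> R_t V A \<and> (x,y) \<in> A) \<or> (y \<in> Q_t V A \<and> x \<in> R_t V A \<and> (y,x) \<in> A)"
    using h by blast
next
  assume "(x \<in> Q_t V A \<and> y \<in> R_t V A \<and> (x,y) \<in> A) \<or> (y \<in> Q_t V A \<and> x \<in> R_t V A \<and> (y,x) \<in> A)"
  thus "{x,y} \<in> J_edges V A"
  proof
    assume "x \<in> Q_t V A \<and> y \<in> R_t V A \<and> (x,y) \<in> A"
    thus ?thesis unfolding J_edges_def by blast
  next
    assume h: "y \<in> Q_t V A \<and> x \<in> R_t V A \<and> (y,x) \<in> A"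
    have "{x,y} = {y,x}" by (rule insert_commute)
    thus ?thesis using h unfolding J_edges_def by blast
  qed
qed

lemma Q_notX:
  assumes bn: "binary_network V A X rho" and q: "q \<in> Q_t V A"
  shows "q \<notin> X"
proof -
  obtain r where "(q,r) \<in> A" using q unfolding Q_t_def by blast
  hence "{w. (q,w) \<in> A} \<noteq> {}" by blast
  hence "outdeg A q \<noteq> 0" using fin_ch[OF bn, of q] by (simp add: outdeg_def)
  thus ?thesis using bn_basic(6)[OF bn] by simp
qed

lemma reach:
  assumes bn: "binary_network V A X rho" and v: "v \<in> V"
  shows "(rho, v) \<in> A\<^sup>*"
proof -
  note b = bn_basic[OF bn]
  have finA: "finite A" using b(1,2) by (meson finite_SigmaI finite_subset)
  have wf: "wf A" using finite_acyclic_wf[OF finA b(3)] .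
  show ?thesis using v
  proof (induction v rule: wf_induct_rule[OF wf])
    case (1 x)
    show ?case
    proof (cases "x = rho")
      case True thus ?thesis by simp
    next
      case False
      hence "indeg A x \<noteq> 0" using b(5)[OF "1.prems"] by simp
      hence "{u. (u,x) \<in> A} \<noteq> {}" unfolding indeg_def by (metis card.empty)
      then obtain u where u: "(u,x) \<in> A" by blast
      hence "u \<in> V" using b(2) by blast
      hence "(rho,u) \<in> A\<^sup>*" using "1.IH" u by blast
      thus ?thesis using u by (rule rtrancl_into_rtrancl)
    qed
  qed
qed

lemma Q_tree:
  assumes bn: "binary_network V A X rho" and q: "q \<in> Q_t V A"
  shows "tree_vertex V A q"
proof -
  note b = bn_basic[OF bn]
  have qV: "q \<in> V" and nr: "\<not> reticulation V A q" using Q_not_ret[OF q] by auto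
  have i1: "indeg A q \<le> 1" using nr qV by (simp add: reticulation_def)
  have nx: "q \<notin> X" using Q_notX[OF bn q] .
  show ?thesis
  proof (cases "q = rho")
    case False
    hence "(indeg A q = 1 \<and> outdeg A q \<ge> 2) \<or> (indeg A q \<ge> 2 \<and> outdeg A q = 1)" using b(8) qV nx by blast
    thus ?thesis using i1 qV by (auto simp: tree_vertex_def)
  next
    case True
    obtain r where r: "r \<in> R_t V A" "(q,r) \<in> A" using q unfolding Q_t_def by blast
    have "outdeg A rho \<ge> 2"
    proof (rule ccontr)
      assume "\<not> outdeg A rho \<ge> 2"
      hence "outdeg A rho = 1" using b(12) by simp
      then obtain z where z: "{w. (rho,w) \<in> A} = {z}" unfolding outdeg_def using card_1_singleton_iff by (metis One_nat_def)
      have "r \<in> {z}" using z r True by (metis mem_Collect_eq)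
      hence rz: "r = z" by simp
      have rV: "r \<in> V" and rret: "reticulation V A r" using R_sub[OF r(1)] by auto
      have "indeg A r = 2" using b(10) rV rret by simp
      then obtain p1 p2 where pp: "{u. (u,r) \<in> A} = {p1,p2}" "p1 \<noteq> p2" unfolding indeg_def card_2_iff by blast
      then obtain p where p: "(p,r) \<in> A" "p \<noteq> rho" by (metis insertCI mem_Collect_eq)
      have pV: "p \<in> V" using p b(2) by blast
      have "(rho,p) \<in> A\<^sup>*" using reach[OF bn pV] .
      hence "(rho,p) \<in> A\<^sup>+" using p(2) rtranclD[of rho p A] by blast
      then obtain c where c: "(rho,c) \<in> A" "(c,p) \<in> A\<^sup>*" using tranclD by metis
      have "c \<in> {z}" using z c(1) by (metis mem_Collect_eq)
      hence "c = r" using rz by simp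
      hence "(r,r) \<in> A\<^sup>+" using c(2) p(1) by (meson rtrancl_into_trancl1)
      thus False using b(3) unfolding acyclic_def by blast
    qed
    thus ?thesis using i1 qV True by (simp add: tree_vertex_def)
  qed
qed

lemma R_parents:
  assumes bn: "binary_network V A X rho" and r: "r \<in> R_t V A"
  shows "\<exists>p1 p2. p1 \<noteq> p2 \<and> (p1,r) \<in> A \<and> (p2,r) \<in> A \<and> p1 \<in> Q_t V A \<and> p2 \<in> Q_t V A"
proof -
  note b = bn_basic[OF bn]
  have rV: "r \<in> V" and rret: "reticulation V A r" using R_sub[OF r] by auto
  have "indeg A r = 2" using b(10) rV rret by simp
  then obtain p1 p2 where pp: "{u. (u,r) \<in> A} = {p1,p2}" "p1 \<noteq> p2" unfolding indeg_def card_2_iff by blast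
  hence e: "(p1,r) \<in> A" "(p2,r) \<in> A" by auto
  hence "p1 \<in> Q_t V A" "p2 \<in> Q_t V A" using r b(2) unfolding Q_t_def by auto
  thus ?thesis using e pp(2) by blast
qed

lemma T_to_R:
  assumes bn: "binary_network V A X rho"
    and TA: "T \<subseteq> A" and T1: "\<forall>v \<in> V - {rho}. card {u. (u, v) \<in> T} = 1"
    and TX: "\<forall>v\<in>V. (\<forall>w. (v, w) \<notin> T) \<longrightarrow> v \<in> X"
    and qV: "q \<in> V" and qX: "q \<notin> X" and qnr: "\<not> reticulation V A q"
    and ch: "\<And>c. (q,c) \<in> A \<Longrightarrow> reticulation V A c"
  shows "\<exists>w. (q,w) \<in> T \<and> w \<in> R_t V A"
proof -
  note b = bn_basic[OF bn]
  obtain w where w: "(q,w) \<in> T" using TX qV qX by blast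
  have wA: "(q,w) \<in> A" using w TA by blast
  have wret: "reticulation V A w" using ch[OF wA] .
  have "w \<in> R_t V A"
  proof (rule ccontr)
    assume "w \<notin> R_t V A"
    then obtain p where p: "(p,w) \<in> A" "reticulation V A p" using wret unfolding R_t_def by blast
    note pr = ret_props[OF bn p(2)]
    obtain w' where w': "(p,w') \<in> T" using TX pr(2,4) by blast
    have "(p,w') \<in> A" using w' TA by blast
    obtain z where z: "{x. (p,x) \<in> A} = {z}" using pr(1) unfolding outdeg_def using card_1_singleton_iff by (metis One_nat_def)
    have "w \<in> {z}" "w' \<in> {z}" using z p(1) \<open>(p,w') \<in> A\<close> by (metis mem_Collect_eq)+
    hence "w' = w" by simp
    hence pw: "(p,w) \<in> T" using w' by simp
    have wV: "w \<in> V" "w \<noteq> rho" using ret_props[OF bn wret] by auto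
    have "card {u. (u, w) \<in> T} = 1" using T1 wV by blast
    then obtain y where "{u. (u, w) \<in> T} = {y}" using card_1_singleton_iff by (metis One_nat_def)
    hence "p \<in> {y}" "q \<in> {y}" using pw w by (metis mem_Collect_eq)+
    hence "p = q" by simp
    thus False using p(2) qnr by simp
  qed
  thus ?thesis using w by blast
qed

lemma path_hd:
  assumes P: "is_path_on C E ps" and w: "w \<in> C" and e: "{hd ps, w} \<in> E"
  shows "w = ps!1"
proof -
  have ne: "ps \<noteq> []" and d: "distinct ps" and s: "set ps = C" using P by (auto simp: is_path_on_def)
  have h: "hd ps = ps!0" using ne by (simp add: hd_conv_nth)
  have "hd ps \<in> C" using ne s hd_in_set by blast
  then obtain i where i: "Suc i < length ps" "{hd ps, w} = {ps!i, ps!Suc i}"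
    using P w e unfolding is_path_on_def by blast
  have l: "0 < length ps" "i < length ps" using i by auto
  have "(ps!0 = ps!i \<and> w = ps!Suc i) \<or> (ps!0 = ps!Suc i \<and> w = ps!i)" using i(2) h by (simp add: doubleton_eq_iff)
  thus ?thesis
  proof
    assume a: "ps!0 = ps!i \<and> w = ps!Suc i"
    hence "i = 0" using nth_eq_iff_index_eq[OF d l] by simp
    thus ?thesis using a by simp
  next
    assume a: "ps!0 = ps!Suc i \<and> w = ps!i"
    hence "0 = Suc i" using nth_eq_iff_index_eq[OF d l(1) i(1)] by simp
    thus ?thesis by simp
  qed
qed

lemma path_last:
  assumes P: "is_path_on C E ps" and w: "w \<in> C" and e: "{last ps, w} \<in> E"
  shows "w = ps!(length ps - 2)"
proof -
  have ne: "ps \<noteq> []" and d: "distinct ps" and s: "set ps = C" using P by (auto simp: is_path_on_def)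
  have h: "last ps = ps!(length ps - 1)" using ne by (simp add: last_conv_nth)
  have "last ps \<in> C" using ne s last_in_set by blast
  then obtain i where i: "Suc i < length ps" "{last ps, w} = {ps!i, ps!Suc i}"
    using P w e unfolding is_path_on_def by blast
  have l: "length ps - 1 < length ps" "i < length ps" using i by auto
  have "(ps!(length ps - 1) = ps!i \<and> w = ps!Suc i) \<or> (ps!(length ps - 1) = ps!Suc i \<and> w = ps!i)"
    using i(2) h by (simp add: doubleton_eq_iff)
  thus ?thesis
  proof
    assume a: "ps!(length ps - 1) = ps!i \<and> w = ps!Suc i"
    hence "length ps - 1 = i" using nth_eq_iff_index_eq[OF d l] by simp
    thus ?thesis using i(1) by simp
  next
    assume a: "ps!(length ps - 1) = ps!Suc i \<and> w = ps!i"
    hence "length ps - 1 = Suc i" using nth_eq_iff_index_eq[OF d l(1) i(1)] by simp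
    hence "i = length ps - 2" by simp
    thus ?thesis using a by simp
  qed
qed


theorem lemma2:
  assumes "binary_network V A X rho"
    and "tree_based V A X rho"
    and "C \<in> ug_components (J_vertices V A) (J_edges V A)"
  shows "(\<exists>ps. is_cycle_on C (J_edges V A) ps)
       \<or> (\<exists>ps. is_path_on C (J_edges V A) ps
              \<and> tree_vertex V A (hd ps) \<and> tree_vertex V A (last ps)
              \<and> \<not> omnian V A X (hd ps) \<and> \<not> omnian V A X (last ps))
       \<or> (\<exists>ps. is_path_on C (J_edges V A) ps
              \<and> tree_vertex V A (hd ps) \<and> tree_vertex V A (last ps)
              \<and> (omnian V A X (hd ps) \<longleftrightarrow> \<not> omnian V A X (last ps)))"
proof -
  note bn = assms(1)
  note b = bn_basic[OF bn]
  obtain T where TA: "T \<subseteq> A" and T1: "\<forall>v\<in>V-{rho}. card {u. (u,v)\<in>T} = 1"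
    and TX: "\<forall>v\<in>V. (\<forall>w. (v,w)\<notin>T) \<longrightarrow> v\<in>X"
    using assms(2) unfolding tree_based_def by blast
  obtain v where v: "v \<in> J_vertices V A"
    and C: "C = {w. (v,w) \<in> {(x,y). {x,y} \<in> J_edges V A}\<^sup>*}"
    using assms(3) unfolding ug_components_def by blast
  have WV: "J_vertices V A \<subseteq> V"
  proof
    fix x assume "x \<in> J_vertices V A"
    hence "x \<in> Q_t V A \<or> x \<in> R_t V A" by (simp add: J_vertices_def)
    thus "x \<in> V" using Q_not_ret[of x V A] R_sub[of x V A] by blast
  qed
  have finW: "finite (J_vertices V A)" using WV b(1) finite_subset by blast
  have ew: "x \<in> J_vertices V A" if "{x,y} \<in> J_edges V A" for x y
    using that unfolding J_edge_iff J_vertices_def by blast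
  have irr: "{x} \<notin> J_edges V A" for x
  proof
    assume "{x} \<in> J_edges V A"
    hence "{x,x} \<in> J_edges V A" by simp
    hence "x \<in> Q_t V A" "x \<in> R_t V A" unfolding J_edge_iff by auto
    thus False using QR_disj[of x V A] by simp
  qed
  have deg: "a=b \<or> a=c \<or> b=c"
    if e: "{u,a}\<in>J_edges V A" "{u,b}\<in>J_edges V A" "{u,c}\<in>J_edges V A" for u a b c
  proof (cases "u \<in> Q_t V A")
    case True
    hence nR: "u \<notin> R_t V A" using QR_disj[of u V A] by simp
    have "(u,a) \<in> A" "(u,b) \<in> A" "(u,c) \<in> A" using e nR unfolding J_edge_iff by auto
    moreover have uV: "u \<in> V" using Q_not_ret[OF True] by simp
    ultimately show ?thesis using three_le2[OF fin_ch[OF bn, of u], of a b c] outdeg_le2[OF bn uV]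
      unfolding outdeg_def by simp
  next
    case False
    have par: "(a,u) \<in> A" "(b,u) \<in> A" "(c,u) \<in> A" "u \<in> R_t V A" using e False unfolding J_edge_iff by auto
    have uV: "u \<in> V" using R_sub[OF par(4)] by simp
    show ?thesis using three_le2[OF fin_par[OF bn, of u], of a b c] indeg_le2[OF bn uV] par
      unfolding indeg_def by simp
  qed
  have CW: "C \<subseteq> J_vertices V A"
  proof
    fix w assume "w\<in>C"
    hence "(v,w)\<in>{(x,y). {x,y} \<in> J_edges V A}\<^sup>*" using C by simp
    thus "w \<in> J_vertices V A" proof (induction rule: rtrancl_induct)
      case base show ?case using v .
    next
      case (step y z) hence "{y,z} \<in> J_edges V A" by simp
      hence "{z,y} \<in> J_edges V A" by (rule edge_sym)
      thus ?case using ew by blast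
    qed
  qed
  have closed: "w\<in>C" if "u\<in>C" "{u,w}\<in>J_edges V A" for u w
  proof -
    have "(v,u)\<in>{(x,y). {x,y} \<in> J_edges V A}\<^sup>*" "(u,w)\<in>{(x,y). {x,y} \<in> J_edges V A}" using C that by auto
    hence "(v,w)\<in>{(x,y). {x,y} \<in> J_edges V A}\<^sup>*" by (rule rtrancl_into_rtrancl)
    thus ?thesis using C by simp
  qed
  have QRC: "x \<in> Q_t V A \<or> x \<in> R_t V A" if "x \<in> C" for x
    using that CW unfolding J_vertices_def by blast
  from path_or_cycle[OF finW ew irr deg v C]
  show ?thesis
  proof
    assume "\<exists>ps. is_cycle_on C (J_edges V A) ps"
    thus ?thesis by blast
  next
    assume "\<exists>ps. is_path_on C (J_edges V A) ps"
    then obtain ps where P: "is_path_on C (J_edges V A) ps" by blast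
    define n where "n = length ps"
    have Pc: "ps \<noteq> [] \<and> distinct ps \<and> set ps = C \<and> (\<forall>u\<in>C. \<forall>w\<in>C. {u,w} \<in> J_edges V A \<longleftrightarrow> (\<exists>i. Suc i < n \<and> {u, w} = {ps ! i, ps ! Suc i}))"
      using P unfolding is_path_on_def n_def .
    have ne: "ps \<noteq> []" and dist: "distinct ps" and setC: "set ps = C" using Pc by blast+
    have pe0: "\<forall>u\<in>C. \<forall>w\<in>C. {u,w} \<in> J_edges V A \<longleftrightarrow> (\<exists>i. Suc i < n \<and> {u, w} = {ps ! i, ps ! Suc i})"
      using Pc by (elim conjE)
    have pe: "{u,w} \<in> J_edges V A \<longleftrightarrow> (\<exists>i. Suc i < n \<and> {u, w} = {ps ! i, ps ! Suc i})"
      if "u \<in> C" "w \<in> C" for u w using pe0 that by (meson bspec)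
    have npos: "0 < n" using ne n_def by simp
    have hdC: "hd ps \<in> C" using ne setC hd_in_set by blast
    have lastC: "last ps \<in> C" using ne setC last_in_set by blast
    have hdQ: "hd ps \<in> Q_t V A"
    proof (rule ccontr)
      assume "hd ps \<notin> Q_t V A"
      hence r: "hd ps \<in> R_t V A" using QRC hdC by blast
      obtain p1 p2 where p: "p1 \<noteq> p2" "(p1,hd ps) \<in> A" "(p2,hd ps) \<in> A" "p1 \<in> Q_t V A" "p2 \<in> Q_t V A"
        using R_parents[OF bn r] by blast
      have ee: "{p1, hd ps} \<in> J_edges V A" "{p2, hd ps} \<in> J_edges V A" using p r unfolding J_edge_iff by auto
      note e = edge_sym[OF ee(1)] edge_sym[OF ee(2)]
      hence "p1 \<in> C" "p2 \<in> C" using closed hdC by blast+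
      hence "p1 = ps!1" "p2 = ps!1" using path_hd[OF P] e by blast+
      thus False using p(1) by simp
    qed
    have lastQ: "last ps \<in> Q_t V A"
    proof (rule ccontr)
      assume "last ps \<notin> Q_t V A"
      hence r: "last ps \<in> R_t V A" using QRC lastC by blast
      obtain p1 p2 where p: "p1 \<noteq> p2" "(p1,last ps) \<in> A" "(p2,last ps) \<in> A" "p1 \<in> Q_t V A" "p2 \<in> Q_t V A"
        using R_parents[OF bn r] by blast
      have ee: "{p1, last ps} \<in> J_edges V A" "{p2, last ps} \<in> J_edges V A" using p r unfolding J_edge_iff by auto
      note e = edge_sym[OF ee(1)] edge_sym[OF ee(2)]
      hence "p1 \<in> C" "p2 \<in> C" using closed lastC by blast+
      hence "p1 = ps!(length ps - 2)" "p2 = ps!(length ps - 2)" using path_last[OF P] e by blast+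
      thus False using p(1) by simp
    qed
    have tv: "tree_vertex V A (hd ps)" "tree_vertex V A (last ps)"
      using Q_tree[OF bn hdQ] Q_tree[OF bn lastQ] by auto
    show ?thesis
    proof (cases "omnian V A X (hd ps) \<and> omnian V A X (last ps)")
      case False
      thus ?thesis using P tv by blast
    next
      case True
      have nC: "ps!i \<in> C" if "i < n" for i using that setC n_def nth_mem by blast
      have cons: "{ps!i, ps!Suc i} \<in> J_edges V A" if "Suc i < n" for i
        using pe[OF nC nC] that by (metis Suc_lessD)
      have par: "ps!i \<in> Q_t V A \<longleftrightarrow> even i" if "i < n" for i
        using that
      proof (induction i)
        case 0 thus ?case using hdQ ne by (simp add: hd_conv_nth)
      next
        case (Suc i)
        have IH: "ps!i \<in> Q_t V A \<longleftrightarrow> even i" using Suc by simp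
        have "(ps!i \<in> Q_t V A \<and> ps!Suc i \<in> R_t V A) \<or> (ps!Suc i \<in> Q_t V A \<and> ps!i \<in> R_t V A)"
          using cons[OF Suc.prems] unfolding J_edge_iff by blast
        hence "ps!Suc i \<in> Q_t V A \<longleftrightarrow> ps!i \<notin> Q_t V A" using QR_disj[of "ps!i" V A] QR_disj[of "ps!Suc i" V A] by blast
        thus ?case using IH by simp
      qed
      have oddR: "ps!i \<in> R_t V A" if "i < n" "odd i" for i
        using par[OF that(1)] that QRC[OF nC[OF that(1)]] by blast
      have lastn: "last ps = ps!(n-1)" using ne n_def by (simp add: last_conv_nth)
      have evn: "even (n-1)" using par[of "n-1"] lastQ lastn npos by simp
      have allret: "reticulation V A c" if i: "i < n" "even i" and c: "(ps!i, c) \<in> A" for i c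
      proof -
        consider "i = 0" | "i = n - 1" | "0 < i \<and> i < n - 1" using i by linarith
        thus ?thesis
        proof cases
          case 1
          have "omnian V A X (ps!0)" using True ne by (simp add: hd_conv_nth)
          thus ?thesis using c 1 unfolding omnian_def by blast
        next
          case 2
          have "omnian V A X (ps!(n-1))" using True lastn by simp
          thus ?thesis using c 2 unfolding omnian_def by blast
        next
          case 3
          have l: "i - 1 < n" "Suc i < n" "odd (i-1)" "odd (Suc i)" using 3 i by auto
          have qi: "ps!i \<in> Q_t V A" using par i by blast
          have r1: "ps!(i-1) \<in> R_t V A" "ps!Suc i \<in> R_t V A" using oddR l by blast+
          have "Suc (i-1) = i" using 3 by simp
          hence e1: "{ps!(i-1), ps!i} \<in> J_edges V A" using cons[of "i-1"] 3 i(1) by simp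
          have e2: "{ps!i, ps!Suc i} \<in> J_edges V A" using cons l by blast
          have a1: "(ps!i, ps!(i-1)) \<in> A" using e1 qi r1 QR_disj[of "ps!i" V A] unfolding J_edge_iff by blast
          have a2: "(ps!i, ps!Suc i) \<in> A" using e2 qi r1 QR_disj[of "ps!i" V A] unfolding J_edge_iff by blast
          have qV: "ps!i \<in> V" using Q_not_ret[OF qi] by simp
          have "c = ps!(i-1) \<or> c = ps!Suc i \<or> ps!(i-1) = ps!Suc i"
            using three_le2[OF fin_ch[OF bn, of "ps!i"], of c "ps!(i-1)" "ps!Suc i"] outdeg_le2[OF bn qV] a1 a2 c
            unfolding outdeg_def by simp
          moreover have lps: "i-1 < length ps" "Suc i < length ps" using l n_def by simp_all
          have "ps!(i-1) = ps!Suc i \<longleftrightarrow> i-1 = Suc i" by (rule nth_eq_iff_index_eq[OF dist lps])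
          hence "ps!(i-1) \<noteq> ps!Suc i" by simp
          ultimately have "c = ps!(i-1) \<or> c = ps!Suc i" by blast
          hence "c \<in> R_t V A" using r1 by (elim disjE) simp_all
          thus ?thesis using R_sub[of c V A] by simp
        qed
      qed
      define Ev where "Ev = {i. i < n \<and> even i}"
      define Od where "Od = {i. i < n \<and> odd i}"
      define QC where "QC = nth ps ` Ev"
      define RC where "RC = nth ps ` Od"
      define g where "g q = (SOME w. (q,w) \<in> T \<and> w \<in> R_t V A)" for q
      have gprop: "(q, g q) \<in> T \<and> g q \<in> R_t V A" if qq: "q \<in> QC" for q
      proof -
        obtain i where i: "i < n" "even i" "q = ps!i" using qq unfolding QC_def Ev_def by blast
        have qi: "q \<in> Q_t V A" using par i by blast
        have "\<exists>w. (q,w) \<in> T \<and> w \<in> R_t V A"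
          using T_to_R[OF bn TA T1 TX _ Q_notX[OF bn qi]] Q_not_ret[OF qi] allret[OF i(1,2)] i(3) by blast
        thus ?thesis unfolding g_def by (rule someI_ex)
      qed
      have gRC: "g q \<in> RC" if qq: "q \<in> QC" for q
      proof -
        obtain i where i: "i < n" "even i" "q = ps!i" using qq unfolding QC_def Ev_def by blast
        have qi: "q \<in> Q_t V A" using par i by blast
        have "{q, g q} \<in> J_edges V A" using gprop[OF qq] TA qi unfolding J_edge_iff by blast
        hence "g q \<in> C" using closed nC i by blast
        then obtain j where j: "j < n" "g q = ps!j" using setC n_def by (metis in_set_conv_nth)
        have "ps!j \<notin> Q_t V A" using gprop[OF qq] j QR_disj[of "ps!j" V A] by auto
        hence "odd j" using par j by blast
        thus ?thesis unfolding RC_def Od_def using j by blast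
      qed
      have ginj: "inj_on g QC"
      proof (rule inj_onI)
        fix q1 q2 assume q: "q1 \<in> QC" "q2 \<in> QC" "g q1 = g q2"
        define w where "w = g q1"
        have wR: "w \<in> R_t V A" using gprop[OF q(1)] w_def by simp
        have wret: "reticulation V A w" using R_sub[OF wR] by simp
        have "w \<in> V - {rho}" using ret_props[OF bn wret] by simp
        hence "card {u. (u, w) \<in> T} = 1" using T1 by blast
        then obtain y where y: "{u. (u, w) \<in> T} = {y}" using card_1_singleton_iff by (metis One_nat_def)
        have "(q1, g q1) \<in> T" "(q2, g q2) \<in> T" using gprop[OF q(1)] gprop[OF q(2)] by simp_all
        hence "(q1, w) \<in> T" "(q2, w) \<in> T" using q(3) w_def by simp_all
        hence "q1 \<in> {y}" "q2 \<in> {y}" using y by (metis mem_Collect_eq)+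
        thus "q1 = q2" by simp
      qed
      have finE: "finite Ev" "finite Od" unfolding Ev_def Od_def by auto
      have c1: "card QC \<le> card RC"
        using card_inj_on_le[OF ginj _ finite_imageI[OF finE(2)]] gRC unfolding RC_def by blast
      have injE: "inj_on (nth ps) Ev" using inj_on_nth[OF dist] unfolding Ev_def n_def by auto
      have injO: "inj_on (nth ps) Od" using inj_on_nth[OF dist] unfolding Od_def n_def by auto
      have cQ: "card QC = card Ev" unfolding QC_def using card_image[OF injE] .
      have cR: "card RC = card Od" unfolding RC_def using card_image[OF injO] .
      have sub: "Suc ` Od \<subseteq> Ev - {0}"
      proof
        fix x assume "x \<in> Suc ` Od"
        then obtain i where i: "i < n" "odd i" "x = Suc i" unfolding Od_def by blast
        have "i \<noteq> n - 1" using i evn by auto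
        hence "Suc i < n" using i by linarith
        thus "x \<in> Ev - {0}" using i unfolding Ev_def by auto
      qed
      have "card Od \<le> card (Ev - {0})"
        using card_inj_on_le[OF inj_Suc[of Od] sub] finE by blast
      moreover have "0 \<in> Ev" using npos unfolding Ev_def by simp
      hence "card (Ev - {0}) = card Ev - 1" using finE by simp
      moreover have "card Ev > 0" using \<open>0 \<in> Ev\<close> finE card_gt_0_iff by blast
      ultimately show ?thesis using c1 cQ cR by linarith
    qed
  qed
qed

end
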